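(* Let $\{a_j\}\subset\mathbb{C}$ be a sequence of (not necessarily distinct) points in the open upper half plane, with $|a_1|\le|a_2|\le\cdots$, and suppose that for some constants $C_0$ and $\rho$, $$n(r)=\#\{j: |a_j|\le r\}\le C_0 r^\rho\quad\text{when } r\ge 1.$$ Suppose $\rho>0$ is not an integer, let $p$ be the greatest integer less than $\rho$, and set $$f(z)=\prod_{n=1}^\infty\frac{E_p(z/\overline{a_n})}{E_p(z/a_n)}.$$ Then for $x\in\mathbb{R}$, $$\left|\int_0^x\frac{f'(t)}{f(t)}\,dt\right|=O(|x|^\rho)\quad\text{as } |x|\to\infty.$$
   Context: The canonical factors are $E_0(z)=1-z$ and, for $p\in\mathbb{N}$, $E_p(z)=(1-z)\exp\!\big(z+z^2/2+\cdots+z^p/p\big)$. *)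

theory Defs
  imports "HOL-Complex_Analysis.Complex_Analysis" "HOL-Library.Landau_Symbols"
begin

text \<open>The canonical factor E_p is the library's weierstrass_factor p:
  (1 - z) * exp (sum_{k=1..p} z^k / k).\<close>

definition oint0 :: "(real \<Rightarrow> complex) \<Rightarrow> real \<Rightarrow> complex" where
  "oint0 g x = (if 0 \<le> x then integral {0..x} g else - integral {x..0} g)"

end

theory Submission
  imports Defs
begin


definition LE :: "nat \<Rightarrow> complex \<Rightarrow> complex" where
  "LE p w = Ln (1 - w) + (\<Sum>k=1..p. w ^ k / of_nat k)"

lemma LE_0 [simp]: "LE p 0 = 0"
proof -
  have "(\<Sum>k=1..p. (0::complex) ^ k / of_nat k) = 0" by (rule sum.neutral) auto
  thus ?thesis by (simp add: LE_def)
qed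

lemma LE_exp: "w \<noteq> 1 \<Longrightarrow> exp (LE p w) = weierstrass_factor p w"
  by (simp add: LE_def weierstrass_factor_def exp_add)

lemma geom_aux: "(1 - w) * (\<Sum>k=1..p. w ^ (k - 1)) = 1 - (w::complex) ^ p"
proof (induction p)
  case (Suc p)
  have "(1 - w) * (\<Sum>k=1..Suc p. w ^ (k - 1)) = (1 - w) * (\<Sum>k=1..p. w ^ (k - 1)) + (1 - w) * w ^ p"
    by (simp add: sum.cl_ivl_Suc distrib_left)
  also have "\<dots> = 1 - w ^ Suc p" using Suc.IH by (simp add: algebra_simps)
  finally show ?case .
qed simp

lemma LE_deriv:
  assumes "1 - w \<notin> \<real>\<^sub>\<le>\<^sub>0"
  shows "(LE p has_field_derivative (-(w ^ p) / (1 - w))) (at w)"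
proof -
  have w1: "1 - w \<noteq> 0" using assms by auto
  have d1: "((\<lambda>w. Ln (1 - w)) has_field_derivative inverse (1 - w) * (-1)) (at w)"
  proof -
    have "((\<lambda>w. 1 - w) has_field_derivative -1) (at w)" by (auto intro!: derivative_eq_intros)
    from DERIV_chain2[OF has_field_derivative_Ln[OF assms] this] show ?thesis .
  qed
  have d2: "((\<lambda>w. \<Sum>k=1..p. w ^ k / of_nat k) has_field_derivative (\<Sum>k=1..p. w ^ (k - 1))) (at w)"
  proof -
    have "((\<lambda>w. \<Sum>k=1..p. w ^ k / of_nat k) has_field_derivative (\<Sum>k=1..p. of_nat k * w ^ (k - 1) / of_nat k)) (at w)"
      by (auto intro!: derivative_eq_intros)
    moreover have "(\<Sum>k=1..p. of_nat k * w ^ (k - 1) / of_nat k) = (\<Sum>k=1..p. w ^ (k - 1))"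
      by (intro sum.cong) auto
    ultimately show ?thesis by simp
  qed
  have "(LE p has_field_derivative (inverse (1 - w) * (-1) + (\<Sum>k=1..p. w ^ (k - 1)))) (at w)"
    unfolding LE_def[abs_def] by (intro DERIV_add d1 d2)
  moreover have "inverse (1 - w) * (-1) + (\<Sum>k=1..p. w ^ (k - 1)) = -(w ^ p) / (1 - w)"
  proof -
    have "(\<Sum>k=1..p. w ^ (k - 1)) = (1 - w ^ p) / (1 - w)" using geom_aux[of w p] w1 by (simp add: eq_divide_eq mult.commute)
    thus ?thesis using w1 by (simp add: inverse_eq_divide add_divide_distrib[symmetric] diff_divide_distrib)
  qed
  ultimately show ?thesis by simp
qed

lemma LE_small:
  assumes "norm w \<le> 1/2"
  shows "norm (LE p w) \<le> 2 * norm w ^ Suc p"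
proof -
  have "norm (LE p w - LE p 0) \<le> (2 * norm w ^ p) * norm (w - 0)"
  proof (rule field_differentiable_bound[where S = "cball 0 (norm w)"])
    fix u :: complex assume u: "u \<in> cball 0 (norm w)"
    hence "norm u \<le> norm w" by (simp add: dist_norm)
    hence un: "norm u \<le> 1/2" using assms by linarith
    have "Re u \<le> 1/2" using un complex_Re_le_cmod[of u] by linarith
    hence "Re (1 - u) > 0" by simp
    hence "1 - u \<notin> \<real>\<^sub>\<le>\<^sub>0" by (simp add: complex_nonpos_Reals_iff)
    thus "(LE p has_field_derivative (-(u ^ p) / (1 - u))) (at u within cball 0 (norm w))"
      by (rule has_field_derivative_at_within[OF LE_deriv])
    have "norm (1 - u) \<ge> 1 - norm u" using norm_triangle_ineq2[of 1 u] by simp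
    hence n1: "norm (1 - u) \<ge> 1/2" using un by linarith
    have "norm (-(u ^ p) / (1 - u)) = norm u ^ p / norm (1 - u)" by (simp add: norm_divide norm_power)
    also have "\<dots> \<le> norm w ^ p / (1/2)"
    proof (rule frac_le)
      show "norm u ^ p \<le> norm w ^ p" using u by (intro power_mono) auto
    qed (use n1 in auto)
    finally show "norm (-(u ^ p) / (1 - u)) \<le> 2 * norm w ^ p" by simp
  qed auto
  thus ?thesis by (simp add: mult.commute mult.left_commute)
qed

lemma LE_Im:
  assumes "w \<noteq> 1"
  shows "\<bar>Im (LE p w)\<bar> \<le> pi + (\<Sum>k=1..p. norm w ^ k)"
proof -
  have "\<bar>Im (Ln (1 - w))\<bar> \<le> pi"
    using mpi_less_Im_Ln[of "1 - w"] Im_Ln_le_pi[of "1 - w"] assms by auto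
  moreover have "\<bar>Im (\<Sum>k=1..p. w ^ k / of_nat k)\<bar> \<le> (\<Sum>k=1..p. norm w ^ k)"
  proof -
    have "\<bar>Im (\<Sum>k=1..p. w ^ k / of_nat k)\<bar> \<le> norm (\<Sum>k=1..p. w ^ k / of_nat k)"
      by (rule abs_Im_le_cmod)
    also have "\<dots> \<le> (\<Sum>k=1..p. norm (w ^ k / of_nat k))" by (rule norm_sum)
    also have "\<dots> \<le> (\<Sum>k=1..p. norm w ^ k)"
    proof (intro sum_mono)
      fix k assume "k \<in> {1..p}"
      hence "real k \<ge> 1" by auto
      thus "norm (w ^ k / of_nat k) \<le> norm w ^ k"
      proof -
        have "norm (w ^ k / of_nat k) = norm w ^ k / real k" by (simp add: norm_divide norm_power)
        also have "\<dots> \<le> norm w ^ k / 1" using \<open>real k \<ge> 1\<close> by (intro divide_left_mono) auto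
        finally show ?thesis by simp
      qed
    qed
    finally show ?thesis .
  qed
  ultimately show ?thesis by (simp add: LE_def)
qed

lemma LE_cnj:
  assumes "1 - w \<notin> \<real>\<^sub>\<le>\<^sub>0"
  shows "LE p (cnj w) = cnj (LE p w)"
  using assms by (simp add: LE_def cnj_Ln)



lemma telescope_le:
  fixes f F :: "nat \<Rightarrow> real"
  assumes "\<And>m. a < m \<Longrightarrow> m \<le> b \<Longrightarrow> f m \<le> F m - F (m - 1)" and "a \<le> b"
  shows "(\<Sum>m\<in>{a<..b}. f m) \<le> F b - F a"
  using assms(2,1)
proof (induction b rule: dec_induct)
  case base thus ?case by simp
next
  case (step n)
  have "{a<..Suc n} = insert (Suc n) {a<..n}" using step.hyps by auto
  hence "(\<Sum>m\<in>{a<..Suc n}. f m) = f (Suc n) + (\<Sum>m\<in>{a<..n}. f m)" by simp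
  also have "\<dots> \<le> (F (Suc n) - F n) + (F n - F a)"
    using step.prems[of "Suc n"] step.IH[OF step.prems] step.hyps by (intro add_mono) auto
  finally show ?case by simp
qed

lemma powr_step:
  fixes m :: real and l :: real
  assumes "m \<ge> 2" "l \<le> 1" "l \<noteq> 0"
  shows "m powr (l - 1) \<le> (m powr l - (m - 1) powr l) / l"
proof -
  have "DERIV (\<lambda>u. u powr l / l) x :> x powr (l - 1)" if "m - 1 \<le> x" "x \<le> m" for x
  proof -
    have "x > 0" using that assms by auto
    hence "DERIV (\<lambda>u. u powr l / l) x :> (l * x powr (l - 1) / l)"
      by (auto intro!: derivative_eq_intros)
    thus "DERIV (\<lambda>u. u powr l / l) x :> x powr (l - 1)" using assms by simp
  qed
  from MVT2[of "m - 1" m, OF _ this] obtain z where z: "m - 1 < z" "z < m" "m powr l / l - (m - 1) powr l / l = (m - (m - 1)) * z powr (l - 1)"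
    by auto
  have "m powr (l - 1) \<le> z powr (l - 1)"
    using z assms by (intro powr_mono2') auto
  also have "\<dots> = (m powr l - (m - 1) powr l) / l"
    using z(3) assms by (simp add: diff_divide_distrib)
  finally show ?thesis .
qed



definition psi :: "nat \<Rightarrow> real \<Rightarrow> real" where
  "psi p s = min (s ^ p) (s ^ Suc p)"

lemma psi_mono: "0 \<le> s \<Longrightarrow> s \<le> t \<Longrightarrow> psi p s \<le> psi p t"
  unfolding psi_def by (intro min.mono power_mono) auto

lemma psi_nonneg: "0 \<le> s \<Longrightarrow> 0 \<le> psi p s"
  unfolding psi_def by auto

lemma sumA:
  assumes "0 < l" "l \<le> 1"
  shows "(\<Sum>m\<in>{0<..M}. real m powr (l - 1)) \<le> real M powr l / l"
proof -
  have "(\<Sum>m\<in>{0<..M}. real m powr (l - 1)) \<le> real M powr l / l - real 0 powr l / l"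
  proof (rule telescope_le)
    fix m :: nat assume m: "0 < m" "m \<le> M"
    show "real m powr (l - 1) \<le> real m powr l / l - real (m - 1) powr l / l"
    proof (cases "m = 1")
      case True thus ?thesis using assms by (simp add: le_divide_eq)
    next
      case False
      hence "real m \<ge> 2" using m by linarith
      from powr_step[OF this, of l] assms m show ?thesis by (simp add: of_nat_diff diff_divide_distrib)
    qed
  qed simp
  thus ?thesis by simp
qed

lemma sumB:
  assumes "l < 0" "1 \<le> M" "M \<le> K"
  shows "(\<Sum>m\<in>{M<..K}. real m powr (l - 1)) \<le> real M powr l / (- l)"
proof -
  have "(\<Sum>m\<in>{M<..K}. real m powr (l - 1)) \<le> real K powr l / l - real M powr l / l"
  proof (rule telescope_le)
    fix m :: nat assume m: "M < m" "m \<le> K"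
    hence "real m \<ge> 2" using assms by linarith
    from powr_step[OF this, of l] assms m
    show "real m powr (l - 1) \<le> real m powr l / l - real (m - 1) powr l / l"
      by (simp add: of_nat_diff diff_divide_distrib)
  qed (use assms in simp)
  moreover have "real K powr l / l \<le> 0" using assms by (simp add: divide_nonneg_neg)
  ultimately show ?thesis by simp
qed

definition BB :: "nat \<Rightarrow> real \<Rightarrow> real" where
  "BB p \<rho> = 1 / (1 - real p / \<rho>) + 2 powr ((real p + 1) / \<rho> - 1) / ((real p + 1) / \<rho> - 1)"

lemma sum_est:
  assumes rho: "0 < \<rho>" "real p < \<rho>" "\<rho> < real p + 1" and Y: "Y \<ge> 1"
  shows "(\<Sum>m\<in>{0<..N}. psi p (Y * real m powr (-1/\<rho>))) \<le> BB p \<rho> * Y powr \<rho>"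
proof -
  define l1 where "l1 = 1 - real p / \<rho>"
  define l2 where "l2 = 1 - (real p + 1) / \<rho>"
  have l1: "0 < l1" "l1 \<le> 1" using rho by (auto simp: l1_def field_simps)
  have l2: "l2 < 0" using rho by (auto simp: l2_def field_simps)
  have Yp: "Y > 0" using Y by simp
  define M where "M = nat \<lfloor>Y powr \<rho>\<rfloor>"
  have Yr1: "Y powr \<rho> \<ge> 1" using Y rho by (simp add: ge_one_powr_ge_zero)
  have M1: "real M \<le> Y powr \<rho>" "Y powr \<rho> < real M + 1" using Yr1 unfolding M_def by linarith+
  have M2: "M \<ge> 1" using Yr1 unfolding M_def by linarith
  have M3: "real M \<ge> Y powr \<rho> / 2" using M1 M2 by linarith
  define b where "b m = (if m \<le> M then Y ^ p * real m powr (l1 - 1) else Y ^ Suc p * real m powr (l2 - 1))" for m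
  have b_nn: "b m \<ge> 0" for m using Yp by (simp add: b_def)
  have le_b: "psi p (Y * real m powr (-1/\<rho>)) \<le> b m" if "m > 0" for m
  proof -
    have mp: "real m > 0" using that by simp
    have e1: "(Y * real m powr (-1/\<rho>)) ^ k = Y ^ k * real m powr (- real k / \<rho>)" for k
      using mp by (simp add: power_mult_distrib powr_power)
    show ?thesis
    proof (cases "m \<le> M")
      case True
      have "psi p (Y * real m powr (-1/\<rho>)) \<le> (Y * real m powr (-1/\<rho>)) ^ p" unfolding psi_def by simp
      also have "\<dots> = Y ^ p * real m powr (l1 - 1)" unfolding e1 by (simp add: l1_def)
      finally show ?thesis using True by (simp add: b_def)
    next
      case False
      have "psi p (Y * real m powr (-1/\<rho>)) \<le> (Y * real m powr (-1/\<rho>)) ^ Suc p" unfolding psi_def by simp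
      also have "\<dots> = Y ^ Suc p * real m powr (l2 - 1)" 
      proof -
        have ex: "- real (Suc p) / \<rho> = l2 - 1" using rho by (simp add: l2_def field_simps)
        show ?thesis by (simp only: e1 ex)
      qed
      finally show ?thesis using False by (simp add: b_def)
    qed
  qed
  define K where "K = max N M"
  have "(\<Sum>m\<in>{0<..N}. psi p (Y * real m powr (-1/\<rho>))) \<le> (\<Sum>m\<in>{0<..N}. b m)"
    by (intro sum_mono le_b) auto
  also have "\<dots> \<le> (\<Sum>m\<in>{0<..K}. b m)"
    by (intro sum_mono2) (auto simp: K_def b_nn)
  also have "{0<..K} = {0<..M} \<union> {M<..K}" using M2 by (auto simp: K_def)
  also have "(\<Sum>m\<in>{0<..M} \<union> {M<..K}. b m) = (\<Sum>m\<in>{0<..M}. b m) + (\<Sum>m\<in>{M<..K}. b m)"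
    by (intro sum.union_disjoint) auto
  also have "(\<Sum>m\<in>{0<..M}. b m) = Y ^ p * (\<Sum>m\<in>{0<..M}. real m powr (l1 - 1))"
    by (simp add: b_def sum_distrib_left)
  also have "(\<Sum>m\<in>{M<..K}. b m) = Y ^ Suc p * (\<Sum>m\<in>{M<..K}. real m powr (l2 - 1))"
    by (simp add: b_def sum_distrib_left)
  also have "Y ^ p * (\<Sum>m\<in>{0<..M}. real m powr (l1 - 1)) \<le> Y ^ p * (real M powr l1 / l1)"
    by (intro mult_left_mono sumA l1) (use Yp in auto)
  also have "Y ^ Suc p * (\<Sum>m\<in>{M<..K}. real m powr (l2 - 1)) \<le> Y ^ Suc p * (real M powr l2 / (- l2))"
    by (intro mult_left_mono sumB l2 M2) (use Yp in \<open>auto simp: K_def\<close>)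
  also have "Y ^ p * (real M powr l1 / l1) \<le> Y ^ p * ((Y powr \<rho>) powr l1 / l1)"
    using l1 M1 M2 Yp by (intro mult_left_mono divide_right_mono powr_mono2) auto
  also have "Y ^ p * ((Y powr \<rho>) powr l1 / l1) = Y powr \<rho> / l1"
  proof -
    have "Y ^ p * (Y powr \<rho>) powr l1 = Y powr (real p + \<rho> * l1)"
      using Yp by (simp add: powr_realpow[symmetric] powr_powr powr_add)
    also have "real p + \<rho> * l1 = \<rho>" using rho by (simp add: l1_def field_simps)
    finally show ?thesis by simp
  qed
  also have "Y ^ Suc p * (real M powr l2 / (- l2)) \<le> Y ^ Suc p * ((Y powr \<rho> / 2) powr l2 / (- l2))"
    using l2 M3 Yp by (intro mult_left_mono divide_right_mono powr_mono2') auto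
  also have "Y ^ Suc p * ((Y powr \<rho> / 2) powr l2 / (- l2)) = 2 powr (- l2) / (- l2) * Y powr \<rho>"
  proof -
    have "(Y powr \<rho> / 2) powr l2 = Y powr (\<rho> * l2) * 2 powr (- l2)"
      using Yp by (simp add: powr_divide powr_powr powr_minus_divide)
    moreover have "Y ^ Suc p * Y powr (\<rho> * l2) = Y powr \<rho>"
    proof -
      have "Y ^ Suc p * Y powr (\<rho> * l2) = Y powr (real p + 1 + \<rho> * l2)"
        using Yp by (simp add: powr_realpow[symmetric] powr_add)
      also have "real p + 1 + \<rho> * l2 = \<rho>" using rho by (simp add: l2_def field_simps)
      finally show ?thesis .
    qed
    ultimately show ?thesis by (simp add: field_simps)
  qed
  finally show ?thesis
    by (simp add: BB_def l1_def l2_def distrib_right)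
qed



definition KK :: "nat \<Rightarrow> real" where
  "KK p = (pi + real p) * 2 ^ Suc p"

lemma norm_cnj_minus: "norm (cnj z - z) = 2 * \<bar>Im z\<bar>"
proof -
  have "cnj z - z = Complex 0 (- 2 * Im z)" by (simp add: complex_eq_iff)
  moreover have "sqrt ((- 2 * Im z)^2) = 2 * \<bar>Im z\<bar>" by (simp only: real_sqrt_abs)
  ultimately show ?thesis by (simp add: cmod_def)
qed

lemma not_nonpos_real:
  assumes "Im a \<noteq> 0"
  shows "1 - complex_of_real x / a \<notin> \<real>\<^sub>\<le>\<^sub>0"
proof (cases "x = 0")
  case True thus ?thesis by (simp add: complex_nonpos_Reals_iff)
next
  case False
  have "a \<noteq> 0" using assms by auto
  have "Im (complex_of_real x / a) = - x * Im a / (norm a)^2"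
    by (simp add: Im_divide cmod_def)
  moreover have "- x * Im a / (norm a)^2 \<noteq> 0" using False assms \<open>a \<noteq> 0\<close> by auto
  ultimately have "Im (1 - complex_of_real x / a) \<noteq> 0" by simp
  thus ?thesis by (auto simp: complex_nonpos_Reals_iff)
qed

lemma sum_pow_le: "0 \<le> s \<Longrightarrow> s \<le> 1 \<Longrightarrow> (\<Sum>k=1..p. s ^ k) \<le> real p"
proof -
  assume "0 \<le> s" "s \<le> 1"
  hence "(\<Sum>k=1..p. s ^ k) \<le> (\<Sum>k=1..(p::nat). 1)" by (intro sum_mono power_le_one) auto
  thus ?thesis by simp
qed

lemma sum_pow_le2: "1 \<le> s \<Longrightarrow> (\<Sum>k=1..p. s ^ k) \<le> real p * s ^ p"
proof -
  assume "1 \<le> s"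
  hence "(\<Sum>k=1..p. s ^ k) \<le> (\<Sum>k=1..(p::nat). s ^ p)" by (intro sum_mono power_increasing) auto
  thus ?thesis by simp
qed

lemma D_real_bound:
  fixes x :: real and a :: complex
  assumes "Im a > 0"
  shows "norm (LE p (complex_of_real x / cnj a) - LE p (complex_of_real x / a))
           \<le> 2 * KK p * psi p (\<bar>x\<bar> / norm a)"
proof -
  define w where "w = complex_of_real x / a"
  define s where "s = \<bar>x\<bar> / norm a"
  have s0: "s \<ge> 0" by (simp add: s_def)
  have ns: "norm w = s" by (simp add: w_def s_def norm_divide)
  have nn: "1 - w \<notin> \<real>\<^sub>\<le>\<^sub>0" unfolding w_def by (rule not_nonpos_real) (use assms in auto)
  hence w1: "w \<noteq> 1" by auto
  have "complex_of_real x / cnj a = cnj w" by (simp add: w_def)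
  hence "LE p (complex_of_real x / cnj a) = cnj (LE p w)" using LE_cnj[OF nn] by simp
  hence eq: "norm (LE p (complex_of_real x / cnj a) - LE p (complex_of_real x / a)) = 2 * \<bar>Im (LE p w)\<bar>"
    by (simp add: norm_cnj_minus w_def)
  have Kge: "KK p \<ge> pi + real p"
  proof -
    have "(pi + real p) * 1 \<le> (pi + real p) * 2 ^ Suc p"
      by (rule mult_left_mono) (use pi_ge_zero one_le_power[of "2::real" "Suc p"] in auto)
    thus ?thesis by (simp add: KK_def)
  qed
  show ?thesis
  proof (cases "s \<le> 1/2")
    case True
    have "\<bar>Im (LE p w)\<bar> \<le> 2 * s ^ Suc p"
      using abs_Im_le_cmod[of "LE p w"] LE_small[of w p] True ns by auto
    moreover have "psi p s = s ^ Suc p" unfolding psi_def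
      using True s0 by (intro min_absorb2 power_decreasing) auto
    moreover have "KK p \<ge> 2" using Kge pi_gt3 by linarith
    ultimately have "\<bar>Im (LE p w)\<bar> \<le> KK p * psi p s"
      using mult_right_mono[of 2 "KK p" "psi p s"] psi_nonneg[OF s0, of p] by linarith
    thus ?thesis using eq unfolding s_def[symmetric] by linarith
  next
    case False
    have im: "\<bar>Im (LE p w)\<bar> \<le> pi + (\<Sum>k=1..p. s ^ k)" using LE_Im[OF w1, of p] ns by simp
    have "pi + (\<Sum>k=1..p. s ^ k) \<le> KK p * psi p s"
    proof (cases "s \<le> 1")
      case True
      have ps: "psi p s = s ^ Suc p" unfolding psi_def
        using True s0 by (intro min_absorb2 power_decreasing) auto
      have "1 \<le> (2 * s) ^ Suc p" using False by (intro one_le_power) auto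
      hence "1 \<le> 2 ^ Suc p * s ^ Suc p" by (simp only: power_mult_distrib)
      hence "pi + real p \<le> (pi + real p) * (2 ^ Suc p * s ^ Suc p)"
        using pi_gt3 mult_left_mono[of 1 "2 ^ Suc p * s ^ Suc p" "pi + real p"] by simp
      thus ?thesis using sum_pow_le[OF s0 True, of p] ps by (simp add: KK_def mult.assoc)
    next
      case False
      hence ps: "psi p s = s ^ p" unfolding psi_def by (intro min_absorb1) auto
      have "1 \<le> s ^ p" using False by auto
      hence "pi \<le> pi * s ^ p" using mult_left_mono[of 1 "s ^ p" pi] pi_ge_zero by simp
      hence "pi + (\<Sum>k=1..p. s ^ k) \<le> (pi + real p) * s ^ p"
        using sum_pow_le2[of s p] False distrib_right[of pi "real p" "s^p"] by linarith
      also have "\<dots> \<le> KK p * s ^ p" using Kge False by (intro mult_right_mono) auto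
      finally show ?thesis using ps by simp
    qed
    thus ?thesis using eq im unfolding s_def[symmetric] by linarith
  qed
qed



lemma lower_bound:
  fixes a :: "nat \<Rightarrow> complex" and C0 \<rho> :: real
  assumes upper: "\<And>j. Im (a j) > 0"
    and mono: "\<And>j. norm (a j) \<le> norm (a (Suc j))"
    and count: "\<And>r. r \<ge> 1 \<Longrightarrow>
                  finite {j. norm (a j) \<le> r} \<and> real (card {j. norm (a j) \<le> r}) \<le> C0 * r powr \<rho>"
    and rho: "\<rho> > 0"
  obtains c where "c > 0" "\<And>n. c * real (Suc n) powr (1/\<rho>) \<le> norm (a n)"
proof -
  have mono': "norm (a i) \<le> norm (a n)" if "i \<le> n" for i n
    using that by (induction n rule: dec_induct) (auto intro: order.trans[OF _ mono])
  have A0: "norm (a 0) > 0" using upper[of 0] by auto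
  have card_ge: "real (Suc n) \<le> C0 * (max 1 (norm (a n))) powr \<rho>" for n
  proof -
    let ?r = "max 1 (norm (a n))"
    have fin: "finite {j. norm (a j) \<le> ?r}" using count[of ?r] by auto
    have "{..n} \<subseteq> {j. norm (a j) \<le> ?r}" using mono'[of _ n] by force
    hence "card {..n} \<le> card {j. norm (a j) \<le> ?r}" by (rule card_mono[OF fin])
    hence "real (Suc n) \<le> real (card {j. norm (a j) \<le> ?r})" by simp
    also have "\<dots> \<le> C0 * ?r powr \<rho>" using count[of ?r] by auto
    finally show ?thesis .
  qed
  have C0: "C0 > 0"
  proof -
    have "1 \<le> C0 * (max 1 (norm (a 0))) powr \<rho>" using card_ge[of 0] by simp
    moreover have "(max 1 (norm (a 0))) powr \<rho> > 0" by simp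
    ultimately show ?thesis by (metis not_less mult_nonpos_nonneg less_le not_one_le_zero order.trans)
  qed
  define c where "c = min 1 (norm (a 0)) * C0 powr (-1/\<rho>)"
  have cpos: "c > 0" using A0 C0 by (simp add: c_def)
  have "c * real (Suc n) powr (1/\<rho>) \<le> norm (a n)" for n
  proof -
    have key: "real (Suc n) powr (1/\<rho>) \<le> C0 powr (1/\<rho>) * max 1 (norm (a n))"
    proof -
      have "real (Suc n) powr (1/\<rho>) \<le> (C0 * (max 1 (norm (a n))) powr \<rho>) powr (1/\<rho>)"
        using card_ge[of n] rho by (intro powr_mono2) auto
      also have "\<dots> = C0 powr (1/\<rho>) * max 1 (norm (a n))"
        using C0 rho by (simp add: powr_mult powr_powr)
      finally show ?thesis .
    qed
    have cC: "c * C0 powr (1/\<rho>) = min 1 (norm (a 0))"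
      using C0 by (simp add: c_def powr_minus field_simps)
    show ?thesis
    proof (cases "norm (a n) \<ge> 1")
      case True
      have "c * real (Suc n) powr (1/\<rho>) \<le> c * (C0 powr (1/\<rho>) * norm (a n))"
        using key True cpos by (intro mult_left_mono) auto
      also have "\<dots> = min 1 (norm (a 0)) * norm (a n)" using cC by (simp add: mult.assoc[symmetric])
      also have "\<dots> \<le> 1 * norm (a n)" by (intro mult_right_mono) auto
      also have "\<dots> = norm (a n)" by simp
      finally show ?thesis .
    next
      case False
      have "c * real (Suc n) powr (1/\<rho>) \<le> c * (C0 powr (1/\<rho>) * 1)"
        using key False cpos by (intro mult_left_mono) auto
      also have "\<dots> = min 1 (norm (a 0))" using cC by simp
      also have "\<dots> \<le> norm (a n)" using mono'[of 0 n] by simp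
      finally show ?thesis .
    qed
  qed
  with cpos that show ?thesis by blast
qed



definition DD :: "nat \<Rightarrow> complex \<Rightarrow> complex \<Rightarrow> complex" where
  "DD p b z = LE p (z / cnj b) - LE p (z / b)"

definition DD' :: "nat \<Rightarrow> complex \<Rightarrow> complex \<Rightarrow> complex" where
  "DD' p b z = (-((z / cnj b) ^ p) / (1 - z / cnj b)) / cnj b - (-((z / b) ^ p) / (1 - z / b)) / b"

lemma DD_0 [simp]: "DD p b 0 = 0" by (simp add: DD_def)

lemma DD_deriv:
  assumes "b \<noteq> 0" "1 - z / b \<notin> \<real>\<^sub>\<le>\<^sub>0" "1 - z / cnj b \<notin> \<real>\<^sub>\<le>\<^sub>0"
  shows "(DD p b has_field_derivative DD' p b z) (at z)"
proof -
  have d1: "((\<lambda>z. LE p (z / cnj b)) has_field_derivative (-((z / cnj b) ^ p) / (1 - z / cnj b)) * (1 / cnj b)) (at z)"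
  proof -
    have "((\<lambda>z. z / cnj b) has_field_derivative 1 / cnj b) (at z)" using assms(1) by (auto intro!: derivative_eq_intros)
    from DERIV_chain2[OF LE_deriv[OF assms(3)] this] show ?thesis .
  qed
  have d2: "((\<lambda>z. LE p (z / b)) has_field_derivative (-((z / b) ^ p) / (1 - z / b)) * (1 / b)) (at z)"
  proof -
    have "((\<lambda>z. z / b) has_field_derivative 1 / b) (at z)" using assms(1) by (auto intro!: derivative_eq_intros)
    from DERIV_chain2[OF LE_deriv[OF assms(2)] this] show ?thesis .
  qed
  from DERIV_diff[OF d1 d2] show ?thesis unfolding DD_def[abs_def] DD'_def by simp
qed

lemma small_not_nonpos: "norm (w::complex) \<le> 1/2 \<Longrightarrow> 1 - w \<notin> \<real>\<^sub>\<le>\<^sub>0"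
proof -
  assume "norm w \<le> 1/2"
  hence "Re w \<le> 1/2" using complex_Re_le_cmod[of w] by linarith
  thus ?thesis by (simp add: complex_nonpos_Reals_iff)
qed

lemma core:
  fixes a :: "nat \<Rightarrow> complex" and p :: nat and f :: "complex \<Rightarrow> complex"
  assumes upper: "\<And>j. Im (a j) > 0"
    and mono: "\<And>j. norm (a j) \<le> norm (a (Suc j))"
    and unb: "\<And>R. \<exists>N. norm (a N) > R"
    and summ: "\<And>R. R > 0 \<Longrightarrow> summable (\<lambda>n. (R / norm (a n)) ^ Suc p)"
    and f_def: "f = (\<lambda>z. \<Prod>n. weierstrass_factor p (z / cnj (a n)) / weierstrass_factor p (z / a n))"
  shows "oint0 (\<lambda>t. deriv f (complex_of_real t) / f (complex_of_real t)) x
          = (\<Sum>n. DD p (a n) (complex_of_real x))"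
proof -
  have mono': "norm (a i) \<le> norm (a n)" if "i \<le> n" for i n
    using that by (induction n rule: dec_induct) (auto intro: order.trans[OF _ mono])
  have anz: "a n \<noteq> 0" for n using upper[of n] by auto
  have canz: "cnj (a n) \<noteq> 0" for n using anz[of n] by simp
  obtain N where N: "norm (a N) > 2 * \<bar>x\<bar> + 2" using unb by blast
  define R where "R = norm (a N) / 2"
  have xR: "\<bar>x\<bar> < R" and R0: "R > 0" using N by (auto simp: R_def)
  have aR: "norm (a n) \<ge> 2 * R" if "n \<ge> N" for n using mono'[OF that] by (simp add: R_def)
  define V where "V = ball 0 R \<inter> (\<Inter>n\<in>{..<N}. ((\<lambda>z. 1 - z / a n) -` (- \<real>\<^sub>\<le>\<^sub>0)) \<inter> ((\<lambda>z. 1 - z / cnj (a n)) -` (- \<real>\<^sub>\<le>\<^sub>0)))"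
  have openV: "open V" unfolding V_def
    by (intro open_Int open_ball open_INT finite_lessThan ballI continuous_open_vimage)
       (auto intro!: continuous_intros simp: anz canz)
  have small: "norm (z / a n) \<le> 1/2" "norm (z / cnj (a n)) \<le> 1/2" if "z \<in> V" "n \<ge> N" for z n
  proof -
    have "norm z < R" using that(1) by (auto simp: V_def)
    hence "norm z / norm (a n) \<le> R / (2 * R)"
      using aR[OF that(2)] R0 by (intro frac_le) auto
    thus "norm (z / a n) \<le> 1/2" "norm (z / cnj (a n)) \<le> 1/2" using R0 by (auto simp: norm_divide)
  qed
  have nonpos: "1 - z / a n \<notin> \<real>\<^sub>\<le>\<^sub>0" "1 - z / cnj (a n) \<notin> \<real>\<^sub>\<le>\<^sub>0" if "z \<in> V" for z n
  proof -
    have "(1 - z / a n \<notin> \<real>\<^sub>\<le>\<^sub>0) \<and> (1 - z / cnj (a n) \<notin> \<real>\<^sub>\<le>\<^sub>0)"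
    proof (cases "n < N")
      case True thus ?thesis using that by (auto simp: V_def)
    next
      case False
      thus ?thesis using small[OF that, of n] small_not_nonpos by auto
    qed
    thus "1 - z / a n \<notin> \<real>\<^sub>\<le>\<^sub>0" "1 - z / cnj (a n) \<notin> \<real>\<^sub>\<le>\<^sub>0" by auto
  qed
  have realV: "complex_of_real t \<in> V" if "\<bar>t\<bar> < R" for t
    unfolding V_def using that
    by (auto intro!: not_nonpos_real simp: upper[THEN less_imp_neq, THEN not_sym])
  define h where "h n = 4 * (R / norm (a n)) ^ Suc p" for n
  have summh: "summable h" unfolding h_def by (intro summable_mult summ R0)
  have hb: "\<forall>\<^sub>F n in sequentially. \<forall>z\<in>V. norm (DD p (a n) z) \<le> h n"
    unfolding eventually_sequentially
  proof (intro exI[of _ N] allI impI ballI)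
    fix n z assume n: "N \<le> n" and z: "z \<in> V"
    have nz: "norm z \<le> R" using z by (auto simp: V_def)
    have q1: "norm (z / a n) \<le> R / norm (a n)" "norm (z / cnj (a n)) \<le> R / norm (a n)"
      using nz by (auto simp: norm_divide divide_right_mono)
    have b1: "norm (LE p (z / a n)) \<le> 2 * (R / norm (a n)) ^ Suc p"
    proof -
      have "norm (LE p (z / a n)) \<le> 2 * norm (z / a n) ^ Suc p" by (rule LE_small[OF small(1)[OF z n]])
      also have "\<dots> \<le> 2 * (R / norm (a n)) ^ Suc p"
        using q1 by (intro mult_left_mono power_mono) auto
      finally show ?thesis .
    qed
    have b2: "norm (LE p (z / cnj (a n))) \<le> 2 * (R / norm (a n)) ^ Suc p"
    proof -
      have "norm (LE p (z / cnj (a n))) \<le> 2 * norm (z / cnj (a n)) ^ Suc p" by (rule LE_small[OF small(2)[OF z n]])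
      also have "\<dots> \<le> 2 * (R / norm (a n)) ^ Suc p"
        using q1 by (intro mult_left_mono power_mono) auto
      finally show ?thesis .
    qed
    have "norm (DD p (a n) z) \<le> norm (LE p (z / cnj (a n))) + norm (LE p (z / a n))"
      unfolding DD_def by (rule norm_triangle_ineq4)
    thus "norm (DD p (a n) z) \<le> h n" using b1 b2 by (simp add: h_def)
  qed
  have hfd: "(DD p (a n) has_field_derivative DD' p (a n) z) (at z)" if "z \<in> V" for n z
    by (rule DD_deriv[OF anz nonpos[OF that]])
  obtain g g' where gg: "\<forall>z\<in>V. ((\<lambda>n. DD p (a n) z) sums g z) \<and> ((\<lambda>n. DD' p (a n) z) sums g' z) \<and> (g has_field_derivative g' z) (at z)"
    using series_and_derivative_comparison[OF openV summh hfd hb] by blast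
  have gL: "g z = (\<Sum>n. DD p (a n) z)" if "z \<in> V" for z using gg that sums_unique by blast
  have fg: "f z = exp (g z)" if "z \<in> V" for z
  proof -
    have "f z = (\<Prod>n. exp (DD p (a n) z))"
    proof -
      have "weierstrass_factor p (z / cnj (a n)) / weierstrass_factor p (z / a n) = exp (DD p (a n) z)" for n
      proof -
        have "z / a n \<noteq> 1" "z / cnj (a n) \<noteq> 1" using nonpos[OF that, of n] by auto
        thus ?thesis by (simp add: DD_def LE_exp[symmetric] exp_diff)
      qed
      thus ?thesis by (simp add: f_def)
    qed
    also have "\<dots> = exp (\<Sum>n. DD p (a n) z)" by (rule prodinf_exp) (use gg that in \<open>auto simp: sums_iff\<close>)
    finally show ?thesis using gL[OF that] by simp
  qed
  have fderiv: "deriv f z / f z = g' z" if "z \<in> V" for z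
  proof -
    have "((\<lambda>z. exp (g z)) has_field_derivative exp (g z) * g' z) (at z)"
      using gg that by (auto intro!: derivative_eq_intros)
    hence "(f has_field_derivative exp (g z) * g' z) (at z)"
      by (rule has_field_derivative_transform_within_open[OF _ openV that]) (simp add: fg)
    hence "deriv f z = exp (g z) * g' z" by (rule DERIV_imp_deriv)
    thus ?thesis using fg[OF that] by simp
  qed
  have g0: "g 0 = 0" using gL[OF realV[of 0]] R0 by simp
  have FTC: "((\<lambda>t. deriv f (complex_of_real t) / f (complex_of_real t)) has_integral (g (complex_of_real v) - g (complex_of_real u))) {u..v}"
    if "u \<le> v" "\<bar>u\<bar> < R" "\<bar>v\<bar> < R" for u v
  proof -
    have inV: "complex_of_real t \<in> V" if "t \<in> {u..v}" for t
      using that \<open>\<bar>u\<bar> < R\<close> \<open>\<bar>v\<bar> < R\<close> by (intro realV) auto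
    have "((\<lambda>t. g' (complex_of_real t)) has_integral (g (complex_of_real v) - g (complex_of_real u))) {u..v}"
    proof (rule fundamental_theorem_of_calculus[OF \<open>u \<le> v\<close>])
      fix t assume "t \<in> {u..v}"
      hence "(g has_field_derivative g' (complex_of_real t)) (at (complex_of_real t))" using gg inV by blast
      thus "((\<lambda>t. g (complex_of_real t)) has_vector_derivative g' (complex_of_real t)) (at t within {u..v})"
        by (rule has_vector_derivative_real_field)
    qed
    thus ?thesis by (rule has_integral_eq[rotated]) (use fderiv inV in auto)
  qed
  have "oint0 (\<lambda>t. deriv f (complex_of_real t) / f (complex_of_real t)) x = g (complex_of_real x)"
  proof (cases "0 \<le> x")
    case True
    have "integral {0..x} (\<lambda>t. deriv f (complex_of_real t) / f (complex_of_real t)) = g (complex_of_real x) - g 0"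
      using FTC[of 0 x] True xR R0 by (simp add: integral_unique)
    thus ?thesis using True g0 by (simp add: oint0_def)
  next
    case False
    have "integral {x..0} (\<lambda>t. deriv f (complex_of_real t) / f (complex_of_real t)) = g 0 - g (complex_of_real x)"
      using FTC[of x 0] False xR R0 by (simp add: integral_unique)
    thus ?thesis using False g0 by (simp add: oint0_def)
  qed
  thus ?thesis using gL[OF realV[OF xR]] by simp
qed



lemma summable_Suc_powr: "e > 1 \<Longrightarrow> summable (\<lambda>n. real (Suc n) powr (- e))"
  using summable_Suc_iff[of "\<lambda>n. real n powr (- e)"] summable_real_powr_iff[of "- e"] by simp

lemma pow_powr_eq:
  fixes m Y \<rho> :: real
  assumes "m > 0"
  shows "(Y * m powr (-1/\<rho>)) ^ Suc p = Y ^ Suc p * m powr (- ((real p + 1) / \<rho>))"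
proof -
  have "(m powr (-1/\<rho>)) ^ Suc p = m powr (of_nat (Suc p) * (-1/\<rho>))"
    by (rule powr_power) (use assms in simp)
  also have "of_nat (Suc p) * (-1/\<rho>) = - ((real p + 1) / \<rho>)" by (simp add: field_simps)
  finally show ?thesis by (simp only: power_mult_distrib)
qed

lemma psi_series_summable:
  assumes "0 < \<rho>" "\<rho> < real p + 1" "Y \<ge> 0"
  shows "summable (\<lambda>n. psi p (Y * real (Suc n) powr (-1/\<rho>)))"
proof (rule summable_comparison_test[OF _ summable_mult[OF summable_Suc_powr[of "(real p + 1) / \<rho>"], of "Y ^ Suc p"]])
  show "(real p + 1) / \<rho> > 1" using assms by (simp add: field_simps)
  show "\<exists>N. \<forall>n\<ge>N. norm (psi p (Y * real (Suc n) powr (-1/\<rho>))) \<le> Y ^ Suc p * real (Suc n) powr (- ((real p + 1) / \<rho>))"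
  proof (intro exI allI impI)
    fix n :: nat
    have "norm (psi p (Y * real (Suc n) powr (-1/\<rho>))) = psi p (Y * real (Suc n) powr (-1/\<rho>))"
      using assms by (simp add: psi_nonneg)
    also have "\<dots> \<le> (Y * real (Suc n) powr (-1/\<rho>)) ^ Suc p" unfolding psi_def by simp
    also have "\<dots> = Y ^ Suc p * real (Suc n) powr (- ((real p + 1) / \<rho>))"
      by (rule pow_powr_eq) simp
    finally show "norm (psi p (Y * real (Suc n) powr (-1/\<rho>))) \<le> Y ^ Suc p * real (Suc n) powr (- ((real p + 1) / \<rho>))" .
  qed
qed

theorem lemma2p3:
  fixes a :: "nat \<Rightarrow> complex" and C0 \<rho> :: real and f :: "complex \<Rightarrow> complex"
  assumes upper: "\<And>j. Im (a j) > 0"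
    and mono: "\<And>j. norm (a j) \<le> norm (a (Suc j))"
    and count: "\<And>r. r \<ge> 1 \<Longrightarrow>
                  finite {j. norm (a j) \<le> r} \<and> real (card {j. norm (a j) \<le> r}) \<le> C0 * r powr \<rho>"
    and rho_pos: "\<rho> > 0"
    and rho_nonint: "\<rho> \<notin> \<int>"
    and f_def: "f = (\<lambda>z. \<Prod>n. weierstrass_factor (nat \<lfloor>\<rho>\<rfloor>) (z / cnj (a n))
                               / weierstrass_factor (nat \<lfloor>\<rho>\<rfloor>) (z / a n))"
  shows "(\<lambda>x::real. norm (oint0 (\<lambda>t. deriv f (complex_of_real t) / f (complex_of_real t)) x))
           \<in> O[at_infinity](\<lambda>x. \<bar>x\<bar> powr \<rho>)"
proof -
  define p where "p = nat \<lfloor>\<rho>\<rfloor>"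
  have fl0: "\<lfloor>\<rho>\<rfloor> \<ge> 0" using rho_pos by simp
  have rp: "real p = of_int \<lfloor>\<rho>\<rfloor>" using fl0 by (simp add: p_def)
  have rho1: "real p < \<rho>"
  proof -
    have "of_int \<lfloor>\<rho>\<rfloor> \<le> \<rho>" by simp
    moreover have "of_int \<lfloor>\<rho>\<rfloor> \<noteq> \<rho>" using rho_nonint by (metis Ints_of_int)
    ultimately show ?thesis using rp by linarith
  qed
  have rho2: "\<rho> < real p + 1" using rp by linarith
  obtain c where c: "c > 0" "\<And>n. c * real (Suc n) powr (1/\<rho>) \<le> norm (a n)"
    using lower_bound[OF upper mono count rho_pos] by blast
  have unb: "\<exists>N. norm (a N) > R" for R
  proof -
    define T where "T = max 1 (R / c + 1)"
    define N where "N = nat \<lceil>T powr \<rho>\<rceil>"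
    have "T powr \<rho> < real (Suc N)" unfolding N_def by linarith
    hence "(T powr \<rho>) powr (1/\<rho>) < real (Suc N) powr (1/\<rho>)"
      using rho_pos by (intro powr_less_mono2) (auto simp: T_def)
    hence "T < real (Suc N) powr (1/\<rho>)" using rho_pos by (simp add: powr_powr T_def)
    hence "c * T < c * real (Suc N) powr (1/\<rho>)" using c by simp
    moreover have "R < c * T" using c by (simp add: T_def field_simps max_def)
    ultimately show ?thesis using c(2)[of N] by (intro exI[of _ N]) linarith
  qed
  have anorm: "norm (a n) > 0" for n using upper[of n] by auto
  have summ: "summable (\<lambda>n. (R / norm (a n)) ^ Suc p)" if R: "R > 0" for R
  proof (rule summable_comparison_test[OF _ summable_mult[OF summable_Suc_powr[of "(real p + 1) / \<rho>"], of "(R / c) ^ Suc p"]])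
    show "(real p + 1) / \<rho> > 1" using rho_pos rho2 by (simp add: field_simps)
    show "\<exists>N. \<forall>n\<ge>N. norm ((R / norm (a n)) ^ Suc p) \<le> (R / c) ^ Suc p * real (Suc n) powr (- ((real p + 1) / \<rho>))"
    proof (intro exI allI impI)
      fix n :: nat
      have pos: "real (Suc n) powr (1/\<rho>) > 0" by simp
      have "R / norm (a n) \<le> R / (c * real (Suc n) powr (1/\<rho>))"
        using c R pos anorm[of n] by (intro divide_left_mono mult_pos_pos) auto
      also have "\<dots> = (R / c) * real (Suc n) powr (-1/\<rho>)"
        by (simp add: powr_minus_divide field_simps)
      finally have le: "R / norm (a n) \<le> (R / c) * real (Suc n) powr (-1/\<rho>)" .
      have "norm ((R / norm (a n)) ^ Suc p) = (R / norm (a n)) ^ Suc p" using R anorm[of n] by simp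
      also have "\<dots> \<le> ((R / c) * real (Suc n) powr (-1/\<rho>)) ^ Suc p"
        using le R anorm[of n] by (intro power_mono) auto
      also have "\<dots> = (R / c) ^ Suc p * real (Suc n) powr (- ((real p + 1) / \<rho>))"
        by (rule pow_powr_eq) simp
      finally show "norm ((R / norm (a n)) ^ Suc p) \<le> (R / c) ^ Suc p * real (Suc n) powr (- ((real p + 1) / \<rho>))" .
    qed
  qed
  have f_def': "f = (\<lambda>z. \<Prod>n. weierstrass_factor p (z / cnj (a n)) / weierstrass_factor p (z / a n))"
    using f_def by (simp add: p_def)
  note core' = core[OF upper mono unb summ f_def']
  define B where "B = 2 * KK p * BB p \<rho> / c powr \<rho>"
  have bound: "norm (oint0 (\<lambda>t. deriv f (complex_of_real t) / f (complex_of_real t)) x) \<le> B * \<bar>x\<bar> powr \<rho>"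
    if x: "\<bar>x\<bar> \<ge> c" for x
  proof -
    define Y where "Y = \<bar>x\<bar> / c"
    have Y1: "Y \<ge> 1" using x c by (simp add: Y_def)
    define G where "G n = 2 * KK p * psi p (Y * real (Suc n) powr (-1/\<rho>))" for n
    have sG: "summable G" unfolding G_def
      by (intro summable_mult psi_series_summable rho_pos rho2) (use Y1 in auto)
    have le: "norm (DD p (a n) (complex_of_real x)) \<le> G n" for n
    proof -
      have "norm (DD p (a n) (complex_of_real x)) \<le> 2 * KK p * psi p (\<bar>x\<bar> / norm (a n))"
        unfolding DD_def by (rule D_real_bound[OF upper])
      also have "\<dots> \<le> G n" unfolding G_def
      proof (intro mult_left_mono psi_mono)
        have pos: "real (Suc n) powr (1/\<rho>) > 0" by simp
        have "\<bar>x\<bar> / norm (a n) \<le> \<bar>x\<bar> / (c * real (Suc n) powr (1/\<rho>))"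
          using c pos anorm[of n] by (intro divide_left_mono mult_pos_pos) auto
        also have "\<dots> = Y * real (Suc n) powr (-1/\<rho>)"
          by (simp add: Y_def powr_minus_divide field_simps)
        finally show "\<bar>x\<bar> / norm (a n) \<le> Y * real (Suc n) powr (-1/\<rho>)" .
        have "KK p \<ge> 0" unfolding KK_def by simp
        thus "0 \<le> 2 * KK p" by simp
      qed auto
      finally show ?thesis .
    qed
    have "norm (oint0 (\<lambda>t. deriv f (complex_of_real t) / f (complex_of_real t)) x) = norm (\<Sum>n. DD p (a n) (complex_of_real x))"
      using core' by simp
    also have "\<dots> \<le> (\<Sum>n. G n)" by (rule norm_suminf_le[OF le sG])
    also have "\<dots> \<le> 2 * KK p * (BB p \<rho> * Y powr \<rho>)"
    proof (rule suminf_le_const[OF sG])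
      fix N
      have "sum G {..<N} = 2 * KK p * (\<Sum>n<N. psi p (Y * real (Suc n) powr (-1/\<rho>)))"
        by (simp add: G_def sum_distrib_left)
      also have "(\<Sum>n<N. psi p (Y * real (Suc n) powr (-1/\<rho>))) = (\<Sum>m\<in>{0<..N}. psi p (Y * real m powr (-1/\<rho>)))"
      proof -
        have "{0<..N} = Suc ` {..<N}" unfolding image_Suc_lessThan by auto
        thus ?thesis by (simp add: sum.reindex)
      qed
      also have "2 * KK p * \<dots> \<le> 2 * KK p * (BB p \<rho> * Y powr \<rho>)"
        by (intro mult_left_mono sum_est rho_pos rho1 rho2 Y1) (simp add: KK_def)
      finally show "sum G {..<N} \<le> 2 * KK p * (BB p \<rho> * Y powr \<rho>)" .
    qed
    also have "\<dots> = B * \<bar>x\<bar> powr \<rho>"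
      using c by (simp add: B_def Y_def powr_divide)
    finally show ?thesis .
  qed
  show ?thesis
  proof (rule bigoI[where c = B])
    show "eventually (\<lambda>x. norm (norm (oint0 (\<lambda>t. deriv f (complex_of_real t) / f (complex_of_real t)) x)) \<le> B * norm (\<bar>x\<bar> powr \<rho>)) at_infinity"
      unfolding eventually_at_infinity
      by (intro exI[of _ c] allI impI) (use bound in simp)
  qed
qed


end
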